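(* Let $\mathbf G=(G,\le,\cdot,/,0,1)$ be a left-residuated po-groupoid whose multiplication is commutative ($x\cdot y=y\cdot x$ for all $x,y$). Then $\mathbf G$ satisfies $x\cdot y=\neg(\neg x/y)$ for all $x,y\in G$ if and only if it satisfies the contraposition law $x/y=\neg y/\neg x$ for all $x,y\in G$.
   Context: A (bounded integral) left-residuated po-groupoid is a structure $\mathbf G=(G,\le,\cdot,/,0,1)$ where $(G,\le,0,1)$ is a bounded poset with least element $0$ and greatest element $1$, $\cdot$ is a binary operation on $G$ with $1\cdot x=x\cdot 1=x$ for all $x$, and $/$ is a binary operation on $G$ satisfying the left residuation law: for all $x,y,z\in G$, $x\cdot y\le z\iff x\le z/y$. The negation is $\neg x:=0/x$. *)

theory Defs
  imports Main
begin

text \<open>A bounded integral left-residuated po-groupoid on carrier G with order le,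
multiplication m, left residual r (r z y = z / y), bottom z0 and top e1.\<close>

definition lr_pogroupoid ::
  "'a set \<Rightarrow> ('a \<Rightarrow> 'a \<Rightarrow> bool) \<Rightarrow> ('a \<Rightarrow> 'a \<Rightarrow> 'a) \<Rightarrow> ('a \<Rightarrow> 'a \<Rightarrow> 'a) \<Rightarrow> 'a \<Rightarrow> 'a \<Rightarrow> bool"
where
  "lr_pogroupoid G le m r z0 e1 \<longleftrightarrow>
     z0 \<in> G \<and> e1 \<in> G \<and>
     (\<forall>x\<in>G. le x x) \<and>
     (\<forall>x\<in>G. \<forall>y\<in>G. le x y \<and> le y x \<longrightarrow> x = y) \<and>
     (\<forall>x\<in>G. \<forall>y\<in>G. \<forall>z\<in>G. le x y \<and> le y z \<longrightarrow> le x z) \<and>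
     (\<forall>x\<in>G. le z0 x \<and> le x e1) \<and>
     (\<forall>x\<in>G. \<forall>y\<in>G. m x y \<in> G) \<and>
     (\<forall>x\<in>G. \<forall>y\<in>G. r x y \<in> G) \<and>
     (\<forall>x\<in>G. m e1 x = x \<and> m x e1 = x) \<and>
     (\<forall>x\<in>G. \<forall>y\<in>G. \<forall>z\<in>G. le (m x y) z \<longleftrightarrow> le x (r z y))"

end

theory Submission
  imports Defs
begin

locale lrp =
  fixes G :: "'a set" and le :: "'a \<Rightarrow> 'a \<Rightarrow> bool"
    and m r :: "'a \<Rightarrow> 'a \<Rightarrow> 'a" and z0 e1 :: 'a
  assumes A: "lr_pogroupoid G le m r z0 e1"
    and C: "\<forall>x\<in>G. \<forall>y\<in>G. m x y = m y x"
begin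

lemma D: "z0 \<in> G \<and> e1 \<in> G \<and>
     (\<forall>x\<in>G. le x x) \<and>
     (\<forall>x\<in>G. \<forall>y\<in>G. le x y \<and> le y x \<longrightarrow> x = y) \<and>
     (\<forall>x\<in>G. \<forall>y\<in>G. \<forall>z\<in>G. le x y \<and> le y z \<longrightarrow> le x z) \<and>
     (\<forall>x\<in>G. le z0 x \<and> le x e1) \<and>
     (\<forall>x\<in>G. \<forall>y\<in>G. m x y \<in> G) \<and>
     (\<forall>x\<in>G. \<forall>y\<in>G. r x y \<in> G) \<and>
     (\<forall>x\<in>G. m e1 x = x \<and> m x e1 = x) \<and>
     (\<forall>x\<in>G. \<forall>y\<in>G. \<forall>z\<in>G. le (m x y) z \<longleftrightarrow> le x (r z y))"
  using A unfolding lr_pogroupoid_def .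

lemma z0G: "z0 \<in> G" using D by (elim conjE)
lemma e1G: "e1 \<in> G" using D by (elim conjE)
lemma rfl0: "\<forall>x\<in>G. le x x" using D by (elim conjE)
lemma rfl: "x \<in> G \<Longrightarrow> le x x" using rfl0 by (rule bspec)
lemma asym0: "\<forall>x\<in>G. \<forall>y\<in>G. le x y \<and> le y x \<longrightarrow> x = y" using D by (elim conjE)
lemma asym: "x \<in> G \<Longrightarrow> y \<in> G \<Longrightarrow> le x y \<Longrightarrow> le y x \<Longrightarrow> x = y"
  using asym0 by blast
lemma trn0: "\<forall>x\<in>G. \<forall>y\<in>G. \<forall>z\<in>G. le x y \<and> le y z \<longrightarrow> le x z" using D by (elim conjE)
lemma trn: "x \<in> G \<Longrightarrow> y \<in> G \<Longrightarrow> z \<in> G \<Longrightarrow> le x y \<Longrightarrow> le y z \<Longrightarrow> le x z"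
  using trn0 by blast
lemma mG0: "\<forall>x\<in>G. \<forall>y\<in>G. m x y \<in> G" using D by (elim conjE)
lemma mG: "x \<in> G \<Longrightarrow> y \<in> G \<Longrightarrow> m x y \<in> G" using mG0 by simp
lemma rG0: "\<forall>x\<in>G. \<forall>y\<in>G. r x y \<in> G" using D by (elim conjE)
lemma rG: "x \<in> G \<Longrightarrow> y \<in> G \<Longrightarrow> r x y \<in> G" using rG0 by simp
lemma unit0: "\<forall>x\<in>G. m e1 x = x \<and> m x e1 = x" using D by (elim conjE)
lemma unit: "x \<in> G \<Longrightarrow> m x e1 = x" using unit0 by simp
lemma res0: "\<forall>x\<in>G. \<forall>y\<in>G. \<forall>z\<in>G. le (m x y) z \<longleftrightarrow> le x (r z y)" using D by (elim conjE)
lemma res: "x \<in> G \<Longrightarrow> y \<in> G \<Longrightarrow> z \<in> G \<Longrightarrow> le (m x y) z \<longleftrightarrow> le x (r z y)"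
  using res0 by simp
lemma com: "x \<in> G \<Longrightarrow> y \<in> G \<Longrightarrow> m x y = m y x" using C by auto

lemma res2: "x \<in> G \<Longrightarrow> y \<in> G \<Longrightarrow> z \<in> G \<Longrightarrow> le (m x y) z \<longleftrightarrow> le y (r z x)"
  using res[of y x z] com[of x y] by auto

lemma ext: assumes "a \<in> G" "b \<in> G" "\<And>z. z \<in> G \<Longrightarrow> le a z \<longleftrightarrow> le b z" shows "a = b"
proof -
  have "le b a" using assms(3)[of a] rfl assms(1) by simp
  moreover have "le a b" using assms(3)[of b] rfl assms(2) by simp
  ultimately show ?thesis using asym[OF assms(1,2)] by blast
qed

lemma ext2: assumes "a \<in> G" "b \<in> G" "\<And>z. z \<in> G \<Longrightarrow> le z a \<longleftrightarrow> le z b" shows "a = b"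
proof -
  have "le a b" using assms(3)[of a] rfl assms(1) by simp
  moreover have "le b a" using assms(3)[of b] rfl assms(2) by simp
  ultimately show ?thesis using asym[OF assms(1,2)] by blast
qed

lemma r1: "b \<in> G \<Longrightarrow> r b e1 = b"
proof (rule ext2)
  fix z assume "b \<in> G" "z \<in> G"
  then show "le z (r b e1) \<longleftrightarrow> le z b" using res[of z e1 b] unit e1G by simp
qed (use e1G rG in auto)

lemma n1: "r z0 e1 = z0" using r1 z0G by auto

lemma mono2: assumes "x \<in> G" "y \<in> G" "y' \<in> G" "le y y'" shows "le (m x y) (m x y')"
proof -
  have "le y' (r (m x y') x)" using res2[of x y' "m x y'"] assms mG rfl by auto
  hence "le y (r (m x y') x)" using trn[of y y' "r (m x y') x"] assms mG rG by simp
  thus ?thesis using res2[of x y "m x y'"] assms mG by simp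
qed

lemma anti: assumes "a \<in> G" "b \<in> G" "le a b" shows "le (r z0 b) (r z0 a)"
proof -
  have "le (m (r z0 b) b) z0" using res[of "r z0 b" b z0] assms z0G rG rfl by auto
  moreover have "le (m (r z0 b) a) (m (r z0 b) b)" using mono2[of "r z0 b" a b] assms rG z0G by simp
  ultimately have "le (m (r z0 b) a) z0" using trn[of "m (r z0 b) a" "m (r z0 b) b" z0] assms rG z0G mG by simp
  thus ?thesis using res[of "r z0 b" a z0] assms rG z0G by simp
qed

end

lemma inv_lemmas:
  assumes "lrp G le m r z0 e1" and inv: "\<And>x. x \<in> G \<Longrightarrow> r z0 (r z0 x) = x"
  shows "\<And>u v. u \<in> G \<Longrightarrow> v \<in> G \<Longrightarrow> le (r z0 u) v \<longleftrightarrow> le (r z0 v) u"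
    and "\<And>u v. u \<in> G \<Longrightarrow> v \<in> G \<Longrightarrow> le (r z0 u) (r z0 v) \<longleftrightarrow> le v u"
proof -
  interpret lrp G le m r z0 e1 by fact
  fix u v assume uv: "u \<in> G" "v \<in> G"
  show "le (r z0 u) v \<longleftrightarrow> le (r z0 v) u"
  proof
    assume "le (r z0 u) v" then have "le (r z0 v) (r z0 (r z0 u))" using anti[of "r z0 u" v] uv rG z0G by simp
    then show "le (r z0 v) u" using inv uv by simp
  next
    assume "le (r z0 v) u" then have "le (r z0 u) (r z0 (r z0 v))" using anti[of "r z0 v" u] uv rG z0G by simp
    then show "le (r z0 u) v" using inv uv by simp
  qed
  show "le (r z0 u) (r z0 v) \<longleftrightarrow> le v u"
  proof
    assume "le (r z0 u) (r z0 v)" then have "le (r z0 (r z0 v)) (r z0 (r z0 u))" using anti[of "r z0 u" "r z0 v"] uv rG z0G by simp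
    then show "le v u" using inv uv by simp
  next
    assume "le v u" then show "le (r z0 u) (r z0 v)" using anti[of v u] uv by simp
  qed
qed

theorem mainTheorem10:
  fixes G :: "'a set" and le :: "'a \<Rightarrow> 'a \<Rightarrow> bool"
    and m r :: "'a \<Rightarrow> 'a \<Rightarrow> 'a" and z0 e1 :: 'a
  assumes "lr_pogroupoid G le m r z0 e1"
    and "\<forall>x\<in>G. \<forall>y\<in>G. m x y = m y x"
  shows "(\<forall>x\<in>G. \<forall>y\<in>G. m x y = r z0 (r (r z0 x) y))
     \<longleftrightarrow> (\<forall>x\<in>G. \<forall>y\<in>G. r x y = r (r z0 y) (r z0 x))"
proof -
  interpret L: lrp G le m r z0 e1 using assms by unfold_locales
  note L.z0G[simp] L.e1G[simp] L.rG[simp] L.mG[simp]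
  show ?thesis
  proof
    assume H: "\<forall>x\<in>G. \<forall>y\<in>G. m x y = r z0 (r (r z0 x) y)"
    have inv: "\<And>x. x \<in> G \<Longrightarrow> r z0 (r z0 x) = x"
    proof -
      fix x assume x: "x \<in> G"
      have "r z0 (r z0 x) = r z0 (r (r z0 x) e1)" using L.r1[of "r z0 x"] x by simp
      also have "\<dots> = m x e1" using H x by simp
      also have "\<dots> = x" using L.unit x by simp
      finally show "r z0 (r z0 x) = x" .
    qed
    note I = inv_lemmas[OF L.lrp_axioms inv]
    show "\<forall>x\<in>G. \<forall>y\<in>G. r x y = r (r z0 y) (r z0 x)"
    proof (intro ballI)
      fix x y assume xy: "x \<in> G" "y \<in> G"
      show "r x y = r (r z0 y) (r z0 x)"
      proof (rule L.ext2)
        fix a assume a: "a \<in> G"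
        have e1: "le a (r x y) \<longleftrightarrow> le (m (r z0 x) y) (r z0 a)"
        proof -
          have "le a (r x y) \<longleftrightarrow> le (m a y) x" using L.res[of a y x] a xy by simp
          also have "\<dots> \<longleftrightarrow> le (r z0 (r (r z0 a) y)) x" using H a xy by simp
          also have "\<dots> \<longleftrightarrow> le (r z0 x) (r (r z0 a) y)" using I(1)[of x "r (r z0 a) y"] a xy by simp
          also have "\<dots> \<longleftrightarrow> le (m (r z0 x) y) (r z0 a)" using L.res[of "r z0 x" y "r z0 a"] a xy by simp
          finally show ?thesis .
        qed
        have e2: "le a (r (r z0 y) (r z0 x)) \<longleftrightarrow> le (m (r z0 x) y) (r z0 a)"
        proof -
          have "le a (r (r z0 y) (r z0 x)) \<longleftrightarrow> le (m a (r z0 x)) (r z0 y)" using L.res[of a "r z0 x" "r z0 y"] a xy by simp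
          also have "\<dots> \<longleftrightarrow> le (r z0 (r (r z0 a) (r z0 x))) (r z0 y)" using H a xy by simp
          also have "\<dots> \<longleftrightarrow> le y (r (r z0 a) (r z0 x))" using I(2)[of "r (r z0 a) (r z0 x)" y] a xy by simp
          also have "\<dots> \<longleftrightarrow> le (m y (r z0 x)) (r z0 a)" using L.res[of y "r z0 x" "r z0 a"] a xy by simp
          also have "\<dots> \<longleftrightarrow> le (m (r z0 x) y) (r z0 a)" using L.com[of y "r z0 x"] a xy by simp
          finally show ?thesis .
        qed
        show "le a (r x y) \<longleftrightarrow> le a (r (r z0 y) (r z0 x))" using e1 e2 by simp
      qed (use xy in auto)
    qed
  next
    assume K: "\<forall>x\<in>G. \<forall>y\<in>G. r x y = r (r z0 y) (r z0 x)"
    have inv: "\<And>x. x \<in> G \<Longrightarrow> r z0 (r z0 x) = x"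
    proof -
      fix x assume x: "x \<in> G"
      have "x = r x e1" using L.r1 x by simp
      also have "\<dots> = r (r z0 e1) (r z0 x)" using bspec[OF bspec[OF K, of x], of e1] x by simp
      also have "\<dots> = r z0 (r z0 x)" using L.n1 by simp
      finally show "r z0 (r z0 x) = x" by simp
    qed
    note I = inv_lemmas[OF L.lrp_axioms inv]
    show "\<forall>x\<in>G. \<forall>y\<in>G. m x y = r z0 (r (r z0 x) y)"
    proof (intro ballI)
      fix x y assume xy: "x \<in> G" "y \<in> G"
      show "m x y = r z0 (r (r z0 x) y)"
      proof (rule L.ext)
        fix z assume z: "z \<in> G"
        have "le (r z0 (r (r z0 x) y)) z \<longleftrightarrow> le (r z0 z) (r (r z0 x) y)" using I(1)[of "r (r z0 x) y" z] z xy by simp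
        also have "\<dots> \<longleftrightarrow> le (m (r z0 z) y) (r z0 x)" using L.res[of "r z0 z" y "r z0 x"] z xy by simp
        also have "\<dots> \<longleftrightarrow> le (m y (r z0 z)) (r z0 x)" using L.com[of "r z0 z" y] z xy by simp
        also have "\<dots> \<longleftrightarrow> le y (r (r z0 x) (r z0 z))" using L.res[of y "r z0 z" "r z0 x"] z xy by simp
        also have "\<dots> \<longleftrightarrow> le y (r z x)" using bspec[OF bspec[OF K, of z], of x] z xy by simp
        also have "\<dots> \<longleftrightarrow> le (m y x) z" using L.res[of y x z] z xy by simp
        also have "\<dots> \<longleftrightarrow> le (m x y) z" using L.com[of y x] z xy by simp
        finally show "le (m x y) z \<longleftrightarrow> le (r z0 (r (r z0 x) y)) z" by simp
      qed (use xy in auto)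
    qed
  qed
qed

end
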